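(* With the notation of the context, let $\beta^*=\inf_{x\in\Delta}F(x)$ and $\alpha^*=\inf_{x\in\Delta}G(x)$. Then $1<\beta^*\le\alpha^*\le\alpha_n$.
   Context: Fix an integer $n\ge2$ and free generators $\xi_1,\dots,\xi_n$ of a free group; throughout $i,j,k\in\{1,\dots,n\}$ and $t,s,p\in\{-1,+1\}$. Let $\Psi$ be the set of reduced words $\xi_i^{2t}$; $\xi_i^t\xi_j^{2s}$ ($i\ne j$); $\xi_i^t\xi_j^s\xi_k^p$ ($i\ne j$, $j\ne k$). For a letter $\xi_a^x$ let $S(\xi_a^x)\subset\Psi$ be the set of words in $\Psi$ beginning with $\xi_a^x$, namely $\{\xi_a^{2x}\}\cup\{\xi_a^x\xi_j^{2s}\}\cup\{\xi_a^x\xi_j^s\xi_k^p\}$; for $a\ne b$ let $S(\xi_a^x\xi_b^y)=\{\xi_a^x\xi_b^{2y}\}\cup\{\xi_a^x\xi_b^y\xi_k^p: k\ne b\}$. A relation $r$ is a pair $(\psi_r,\Psi_r)$ with $\psi_r\in\Psi$, $\Psi_r\subseteq\Psi$; the relations considered are (indices $i_0\ne j_0$, in type 5 $i_0,j_0,k_0$ pairwise distinct, all signs arbitrary): 1a: $\psi_r=\xi_{i_0}^{2t_0}$, $\Psi_r=\Psi\setminus S(\xi_{i_0}^{t_0})$; 1b: $\psi_r=\xi_{i_0}^{2t_0}$, $\Psi_r=\Psi\setminus\{\xi_{i_0}^{t_0}\xi_{j_0}^{s_0}\xi_{i_0}^{t_0}\}$; 2a: $\psi_r=\xi_{i_0}^{t_0}\xi_{j_0}^{2s_0}$,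 $\Psi_r=\Psi\setminus\{\xi_{j_0}^{2s_0}\}$; 2b: $\psi_r=\xi_{i_0}^{t_0}\xi_{j_0}^{2s_0}$, $\Psi_r=\Psi\setminus S(\xi_{i_0}^{t_0}\xi_{j_0}^{s_0})$; 3a: $\psi_r=\xi_{i_0}^{t_0}\xi_{j_0}^{s_0}\xi_{i_0}^{t_0}$, $\Psi_r=\Psi\setminus S(\xi_{j_0}^{s_0}\xi_{i_0}^{t_0})$; 3b: $\psi_r=\xi_{i_0}^{t_0}\xi_{j_0}^{s_0}\xi_{i_0}^{t_0}$, $\Psi_r=\Psi\setminus\{\xi_{i_0}^{2t_0}\}$; 4a: $\psi_r=\xi_{i_0}^{t_0}\xi_{j_0}^{s_0}\xi_{i_0}^{-t_0}$, $\Psi_r=\Psi\setminus S(\xi_{j_0}^{s_0}\xi_{i_0}^{-t_0})$; 4b: $\psi_r=\xi_{i_0}^{t_0}\xi_{j_0}^{s_0}\xi_{i_0}^{-t_0}$, $\Psi_r=S(\xi_{i_0}^{t_0})$; 5a: $\psi_r=\xi_{i_0}^{t_0}\xi_{j_0}^{s_0}\xi_{k_0}^{p_0}$, $\Psi_r=\Psi\setminus S(\xi_{j_0}^{s_0}\xi_{k_0}^{p_0})$; 5b: $\psi_r=\xi_{i_0}^{t_0}\xi_{j_0}^{s_0}\xi_{k_0}^{p_0}$, $\Psi_r=\Psi\setminus S(\xi_{i_0}^{t_0}\xi_{k_0}^{p_0})$. Let $\mathcal{G}$ be the collection of all these relations and $\mathcal{F}\subset\mathcal{G}$ those of types 1a,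 2b, 3a, 4b, 5a. Let $\Delta=\{x\in\mathbb{R}^\Psi: x(\psi)>0\ \forall\psi,\ \sum_{\psi}x(\psi)=1\}$. For a relation $r$ and $x\in\Delta$ put $x_r=x(\psi_r)$, $X_r=\sum_{\psi\in\Psi_r}x(\psi)$, $f_r(x)=\frac{1-x_r}{x_r}\cdot\frac{1-X_r}{X_r}$, $F(x)=\max_{r\in\mathcal{F}}f_r(x)$, $G(x)=\max_{r\in\mathcal{G}}f_r(x)$. The number $\alpha_n$ is the unique real root greater than $(2n-1)^2$ of $\mathcal{P}(\lambda)=(8n^3-12n^2+2n+1)\lambda^4+(-64n^6+192n^5-192n^4+64n^3+4n^2+2n-4)\lambda^3+(-96n^5+224n^4-168n^3+52n^2-18n+6)\lambda^2+(32n^5-112n^4+128n^3-68n^2+22n-4)\lambda+16n^4-32n^3+24n^2-8n+1.$ *)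

theory Defs
  imports Complex_Main
begin

text \<open>A letter xi_i^t is the pair (i,t) with i in {1..n} and t in {-1,1};
  a (reduced) word is the list of its letters.\<close>

type_synonym letter = "nat \<times> int"
type_synonym word = "letter list"

definition sgns :: "int set" where "sgns = {-1, 1}"

definition Psi :: "nat \<Rightarrow> word set" where
  "Psi n =
     {[(i,t),(i,t)] | i t. i \<in> {1..n} \<and> t \<in> sgns}
   \<union> {[(i,t),(j,s),(j,s)] | i t j s. i \<in> {1..n} \<and> j \<in> {1..n} \<and> t \<in> sgns \<and> s \<in> sgns \<and> i \<noteq> j}
   \<union> {[(i,t),(j,s),(k,p)] | i t j s k p. i \<in> {1..n} \<and> j \<in> {1..n} \<and> k \<in> {1..n}
        \<and> t \<in> sgns \<and> s \<in> sgns \<and> p \<in> sgns \<and> i \<noteq> j \<and> j \<noteq> k}"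

text \<open>S(xi_a^x): words of Psi beginning with the letter xi_a^x.\<close>
definition S1 :: "nat \<Rightarrow> nat \<Rightarrow> int \<Rightarrow> word set" where
  "S1 n a x =
     {[(a,x),(a,x)]}
   \<union> {[(a,x),(j,s),(j,s)] | j s. j \<in> {1..n} \<and> s \<in> sgns \<and> j \<noteq> a}
   \<union> {[(a,x),(j,s),(k,p)] | j s k p. j \<in> {1..n} \<and> k \<in> {1..n} \<and> s \<in> sgns \<and> p \<in> sgns
        \<and> a \<noteq> j \<and> j \<noteq> k}"

definition S2 :: "nat \<Rightarrow> nat \<Rightarrow> int \<Rightarrow> nat \<Rightarrow> int \<Rightarrow> word set" where
  "S2 n a x b y =
     {[(a,x),(b,y),(b,y)]}
   \<union> {[(a,x),(b,y),(k,p)] | k p. k \<in> {1..n} \<and> p \<in> sgns \<and> k \<noteq> b}"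

type_synonym relation = "word \<times> word set"

abbreviation idx :: "nat \<Rightarrow> nat set" where "idx n \<equiv> {1..n}"

definition R1a :: "nat \<Rightarrow> relation set" where
  "R1a n = {([(i,t),(i,t)], Psi n - S1 n i t) | i t. i \<in> idx n \<and> t \<in> sgns}"
definition R1b :: "nat \<Rightarrow> relation set" where
  "R1b n = {([(i,t),(i,t)], Psi n - {[(i,t),(j,s),(i,t)]}) | i j t s.
      i \<in> idx n \<and> j \<in> idx n \<and> i \<noteq> j \<and> t \<in> sgns \<and> s \<in> sgns}"
definition R2a :: "nat \<Rightarrow> relation set" where
  "R2a n = {([(i,t),(j,s),(j,s)], Psi n - {[(j,s),(j,s)]}) | i j t s.
      i \<in> idx n \<and> j \<in> idx n \<and> i \<noteq> j \<and> t \<in> sgns \<and> s \<in> sgns}"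
definition R2b :: "nat \<Rightarrow> relation set" where
  "R2b n = {([(i,t),(j,s),(j,s)], Psi n - S2 n i t j s) | i j t s.
      i \<in> idx n \<and> j \<in> idx n \<and> i \<noteq> j \<and> t \<in> sgns \<and> s \<in> sgns}"
definition R3a :: "nat \<Rightarrow> relation set" where
  "R3a n = {([(i,t),(j,s),(i,t)], Psi n - S2 n j s i t) | i j t s.
      i \<in> idx n \<and> j \<in> idx n \<and> i \<noteq> j \<and> t \<in> sgns \<and> s \<in> sgns}"
definition R3b :: "nat \<Rightarrow> relation set" where
  "R3b n = {([(i,t),(j,s),(i,t)], Psi n - {[(i,t),(i,t)]}) | i j t s.
      i \<in> idx n \<and> j \<in> idx n \<and> i \<noteq> j \<and> t \<in> sgns \<and> s \<in> sgns}"
definition R4a :: "nat \<Rightarrow> relation set" where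
  "R4a n = {([(i,t),(j,s),(i,-t)], Psi n - S2 n j s i (-t)) | i j t s.
      i \<in> idx n \<and> j \<in> idx n \<and> i \<noteq> j \<and> t \<in> sgns \<and> s \<in> sgns}"
definition R4b :: "nat \<Rightarrow> relation set" where
  "R4b n = {([(i,t),(j,s),(i,-t)], S1 n i t) | i j t s.
      i \<in> idx n \<and> j \<in> idx n \<and> i \<noteq> j \<and> t \<in> sgns \<and> s \<in> sgns}"
definition R5a :: "nat \<Rightarrow> relation set" where
  "R5a n = {([(i,t),(j,s),(k,p)], Psi n - S2 n j s k p) | i j k t s p.
      i \<in> idx n \<and> j \<in> idx n \<and> k \<in> idx n \<and> i \<noteq> j \<and> j \<noteq> k \<and> i \<noteq> k
      \<and> t \<in> sgns \<and> s \<in> sgns \<and> p \<in> sgns}"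
definition R5b :: "nat \<Rightarrow> relation set" where
  "R5b n = {([(i,t),(j,s),(k,p)], Psi n - S2 n i t k p) | i j k t s p.
      i \<in> idx n \<and> j \<in> idx n \<and> k \<in> idx n \<and> i \<noteq> j \<and> j \<noteq> k \<and> i \<noteq> k
      \<and> t \<in> sgns \<and> s \<in> sgns \<and> p \<in> sgns}"

definition relsG :: "nat \<Rightarrow> relation set" where
  "relsG n = R1a n \<union> R1b n \<union> R2a n \<union> R2b n \<union> R3a n \<union> R3b n \<union> R4a n \<union> R4b n \<union> R5a n \<union> R5b n"

definition relsF :: "nat \<Rightarrow> relation set" where
  "relsF n = R1a n \<union> R2b n \<union> R3a n \<union> R4b n \<union> R5a n"

text \<open>The open simplex on Psi (values off Psi are irrelevant).\<close>
definition Delta :: "nat \<Rightarrow> (word \<Rightarrow> real) set" where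
  "Delta n = {x. (\<forall>\<psi>\<in>Psi n. x \<psi> > 0) \<and> (\<Sum>\<psi>\<in>Psi n. x \<psi>) = 1}"

definition frel :: "relation \<Rightarrow> (word \<Rightarrow> real) \<Rightarrow> real" where
  "frel r x = (let xr = x (fst r); Xr = (\<Sum>\<psi>\<in>snd r. x \<psi>)
               in (1 - xr) / xr * ((1 - Xr) / Xr))"

definition Ffun :: "nat \<Rightarrow> (word \<Rightarrow> real) \<Rightarrow> real" where
  "Ffun n x = Max ((\<lambda>r. frel r x) ` relsF n)"

definition Gfun :: "nat \<Rightarrow> (word \<Rightarrow> real) \<Rightarrow> real" where
  "Gfun n x = Max ((\<lambda>r. frel r x) ` relsG n)"

definition Ppoly :: "nat \<Rightarrow> real \<Rightarrow> real" where
  "Ppoly n l = (let m = real n in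
      (8*m^3 - 12*m^2 + 2*m + 1) * l^4
    + (-64*m^6 + 192*m^5 - 192*m^4 + 64*m^3 + 4*m^2 + 2*m - 4) * l^3
    + (-96*m^5 + 224*m^4 - 168*m^3 + 52*m^2 - 18*m + 6) * l^2
    + (32*m^5 - 112*m^4 + 128*m^3 - 68*m^2 + 22*m - 4) * l
    + 16*m^4 - 32*m^3 + 24*m^2 - 8*m + 1)"

definition alpha :: "nat \<Rightarrow> real" where
  "alpha n = (THE l. l > (2 * real n - 1)^2 \<and> Ppoly n l = 0)"

end

theory Submission
  imports Defs
begin


definition Lt :: "nat \<Rightarrow> letter set" where "Lt n = idx n \<times> sgns"

lemma finite_sgns[simp]: "finite sgns" by (simp add: sgns_def)
lemma finite_Lt[simp]: "finite (Lt n)" by (simp add: Lt_def)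

lemma card_Lt: "card (Lt n) = 2 * n"
  by (simp add: Lt_def sgns_def card_cartesian_product)

lemma Psi_sub: "Psi n \<subseteq> {w. set w \<subseteq> Lt n \<and> length w \<le> 3}"
  unfolding Psi_def Lt_def by auto

lemma finite_Psi[simp]: "finite (Psi n)"
  by (rule finite_subset[OF Psi_sub finite_lists_length_le]) simp

lemma S1_sub: "(i,t) \<in> Lt n \<Longrightarrow> S1 n i t \<subseteq> Psi n"
  unfolding S1_def Psi_def Lt_def by auto

lemma S2_sub: "(i,t) \<in> Lt n \<Longrightarrow> (j,s) \<in> Lt n \<Longrightarrow> i \<noteq> j \<Longrightarrow> S2 n i t j s \<subseteq> Psi n"
  unfolding S2_def Psi_def Lt_def by auto

lemma Psi_Union: "Psi n = (\<Union>l\<in>Lt n. S1 n (fst l) (snd l))"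
  unfolding S1_def Psi_def Lt_def by auto

lemma S1_disj: "(i,t) \<noteq> (i',t') \<Longrightarrow> S1 n i t \<inter> S1 n i' t' = {}"
  unfolding S1_def by auto

definition Kset :: "nat \<Rightarrow> nat \<Rightarrow> letter set" where "Kset n i = {l \<in> Lt n. fst l \<noteq> i}"

lemma S1_Union: "S1 n i t = insert [(i,t),(i,t)] (\<Union>l\<in>Kset n i. S2 n i t (fst l) (snd l))"
  unfolding S1_def S2_def Kset_def Lt_def by auto

lemma S2_disj: "(j,s) \<noteq> (j',s') \<Longrightarrow> S2 n i t j s \<inter> S2 n i t j' s' = {}"
  unfolding S2_def by auto

lemma S2_eq: "S2 n i t j s = insert [(i,t),(j,s),(j,s)] ((\<lambda>l. [(i,t),(j,s),l]) ` Kset n j)"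
  unfolding S2_def Kset_def Lt_def by auto

lemma card_Kset: "i \<in> idx n \<Longrightarrow> card (Kset n i) = 2 * (n - 1)"
proof -
  assume i: "i \<in> idx n"
  have "Kset n i = (idx n - {i}) \<times> sgns" unfolding Kset_def Lt_def by auto
  then show ?thesis using i by (simp add: card_cartesian_product sgns_def)
qed

lemma finite_S1[simp]: "finite (S1 n i t)"
proof -
  have "S1 n i t \<subseteq> {w. set w \<subseteq> insert (i,t) (Lt n) \<and> length w \<le> 3}" unfolding S1_def Lt_def by auto
  then show ?thesis by (rule finite_subset) (rule finite_lists_length_le, simp)
qed
lemma finite_S2[simp]: "finite (S2 n i t j s)"
  unfolding S2_def by (auto intro!: finite_subset[OF _ finite_lists_length_le[of "insert (i,t) (insert (j,s) (Lt n))" 3]] simp: Lt_def)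

lemma finite_Kset[simp]: "finite (Kset n i)" by (simp add: Kset_def)

lemma sum_Psi: "sum x (Psi n) = (\<Sum>l\<in>Lt n. sum x (S1 n (fst l) (snd l)))"
  unfolding Psi_Union
  apply (rule sum.UNION_disjoint)
  apply simp
  apply simp
  by (metis S1_disj prod.collapse)

lemma sum_S1: "sum x (S1 n i t) = x [(i,t),(i,t)] + (\<Sum>l\<in>Kset n i. sum x (S2 n i t (fst l) (snd l)))"
proof -
  have "sum x (\<Union>l\<in>Kset n i. S2 n i t (fst l) (snd l)) = (\<Sum>l\<in>Kset n i. sum x (S2 n i t (fst l) (snd l)))"
    apply (rule sum.UNION_disjoint)
    apply simp
    apply simp
    by (metis S2_disj prod.collapse)
  moreover have "[(i,t),(i,t)] \<notin> (\<Union>l\<in>Kset n i. S2 n i t (fst l) (snd l))" by (auto simp: S2_def)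
  ultimately show ?thesis unfolding S1_Union[of n i t] by (simp)
qed

lemma sum_S2: "sum x (S2 n i t j s) = x [(i,t),(j,s),(j,s)] + (\<Sum>l\<in>Kset n j. x [(i,t),(j,s),l])"
proof -
  have "[(i,t),(j,s),(j,s)] \<notin> (\<lambda>l. [(i,t),(j,s),l]) ` Kset n j" by (auto simp: Kset_def)
  moreover have "inj_on (\<lambda>l. [(i,t),(j,s),l]) (Kset n j)" by (auto simp: inj_on_def)
  ultimately show ?thesis unfolding S2_eq by (simp add: sum.reindex)
qed

lemma relsG_sub: "relsG n \<subseteq> Psi n \<times> Pow (Psi n)"
proof -
  have P1: "[(i,t),(i,t)] \<in> Psi n" if "i \<in> idx n" "t \<in> sgns" for i t
    using that unfolding Psi_def by blast
  have P2: "[(i,t),(j,s),(j,s)] \<in> Psi n" if "i \<in> idx n" "t \<in> sgns" "j \<in> idx n" "s \<in> sgns" "i \<noteq> j" for i t j s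
    using that unfolding Psi_def by blast
  have P3: "[(i,t),(j,s),(k,p)] \<in> Psi n" if "i \<in> idx n" "t \<in> sgns" "j \<in> idx n" "s \<in> sgns"
     "k \<in> idx n" "p \<in> sgns" "i \<noteq> j" "j \<noteq> k" for i t j s k p
    using that unfolding Psi_def by blast
  have neg: "t \<in> sgns \<Longrightarrow> - t \<in> sgns" for t by (auto simp: sgns_def)
  have S1s: "S1 n i t \<subseteq> Psi n" if "i \<in> idx n" "t \<in> sgns" for i t using S1_sub[of i t n] that by (simp add: Lt_def)
  have "R1a n \<subseteq> Psi n \<times> Pow (Psi n)" unfolding R1a_def by (auto intro!: P1)
  moreover have "R1b n \<subseteq> Psi n \<times> Pow (Psi n)" unfolding R1b_def by (auto intro!: P1)
  moreover have "R2a n \<subseteq> Psi n \<times> Pow (Psi n)" unfolding R2a_def by (auto intro!: P2)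
  moreover have "R2b n \<subseteq> Psi n \<times> Pow (Psi n)" unfolding R2b_def by (auto intro!: P2)
  moreover have "R3a n \<subseteq> Psi n \<times> Pow (Psi n)" unfolding R3a_def by (auto intro!: P3)
  moreover have "R3b n \<subseteq> Psi n \<times> Pow (Psi n)" unfolding R3b_def by (auto intro!: P3)
  moreover have "R4a n \<subseteq> Psi n \<times> Pow (Psi n)" unfolding R4a_def by (auto intro!: P3 neg)
  moreover have "R4b n \<subseteq> Psi n \<times> Pow (Psi n)"
  proof
    fix r assume "r \<in> R4b n"
    then obtain i j t s where h: "r = ([(i,t),(j,s),(i,-t)], S1 n i t)" "i \<in> idx n" "j \<in> idx n" "i \<noteq> j" "t \<in> sgns" "s \<in> sgns"
      unfolding R4b_def by blast
    show "r \<in> Psi n \<times> Pow (Psi n)"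
      using h(1) S1s[OF h(2) h(5)] P3[OF h(2) h(5) h(3) h(6) h(2) neg[OF h(5)] h(4)] h(4) by auto
  qed
  moreover have "R5a n \<subseteq> Psi n \<times> Pow (Psi n)" unfolding R5a_def by (auto intro!: P3)
  moreover have "R5b n \<subseteq> Psi n \<times> Pow (Psi n)" unfolding R5b_def by (auto intro!: P3)
  ultimately show ?thesis unfolding relsG_def by blast
qed

lemma finite_relsG[simp]: "finite (relsG n)"
  by (rule finite_subset[OF relsG_sub]) simp

lemma relsF_sub: "relsF n \<subseteq> relsG n" unfolding relsF_def relsG_def by auto

lemma finite_relsF[simp]: "finite (relsF n)"
  using finite_subset[OF relsF_sub] by simp

lemma frel_simp: "frel (w, S) x = (1 - x w) / x w * ((1 - sum x S) / sum x S)"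
  by (simp add: frel_def Let_def)

lemma alg1:
  fixes u X :: real
  assumes "0 < u" "0 < X" "X \<le> 1" "(1 - u) / u * ((1 - X) / X) < 3/2"
  shows "1 - u - X < u / 2"
proof -
  have "(1 - u) * (1 - X) < 3/2 * (u * X)"
    using assms by (simp add: field_simps)
  then have "1 - u - X < u * X / 2" by (simp add: algebra_simps)
  also have "\<dots> \<le> u / 2" using assms by (simp add: mult_left_le)
  finally show ?thesis .
qed

lemma sum_sub_bounds:
  assumes x: "x \<in> Delta n" and S: "S \<subseteq> Psi n" and w: "w \<in> S"
  shows "0 < sum x S" "sum x S \<le> 1"
proof -
  have pos: "\<And>v. v \<in> Psi n \<Longrightarrow> 0 < x v" and tot: "sum x (Psi n) = 1" using x by (auto simp: Delta_def)
  have fS: "finite S" using S finite_subset finite_Psi by blast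
  show "0 < sum x S" by (rule sum_pos2[OF fS w]) (use S w pos in \<open>auto intro: less_imp_le\<close>)
  have "sum x S \<le> sum x (Psi n)" by (rule sum_mono2) (use S pos in \<open>auto intro: less_imp_le\<close>)
  then show "sum x S \<le> 1" using tot by simp
qed

lemma F_lower:
  assumes n: "n \<ge> 2" and x: "x \<in> Delta n"
  shows "3/2 \<le> Ffun n x"
proof (rule ccontr)
  assume "\<not> 3/2 \<le> Ffun n x"
  then have lt: "\<And>r. r \<in> relsF n \<Longrightarrow> frel r x < 3/2"
    unfolding Ffun_def using Max_ge[OF finite_imageI[OF finite_relsF]] by (meson image_eqI le_less_trans not_le)
  have pos: "\<And>v. v \<in> Psi n \<Longrightarrow> 0 < x v" and tot: "sum x (Psi n) = 1" using x by (auto simp: Delta_def)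
  have i1: "(1::nat) \<in> idx n" and i2: "(2::nat) \<in> idx n" using n by auto
  have sg: "(1::int) \<in> sgns" "(-1::int) \<in> sgns" by (auto simp: sgns_def)
  have L1: "(1::nat, 1::int) \<in> Lt n" "(1::nat, -1::int) \<in> Lt n" "(2::nat, 1::int) \<in> Lt n"
    using i1 i2 sg by (auto simp: Lt_def)
  define A1 where "A1 = x [(1,1),(1,1)]"
  define A2 where "A2 = x [(1,-1),(1,-1)]"
  define B1 where "B1 = x [(1,1),(2,1),(1,-1)]"
  define B2 where "B2 = x [(1,-1),(2,1),(1,1)]"
  define s1 where "s1 = sum x (S1 n 1 1)"
  define s2 where "s2 = sum x (S1 n 1 (-1))"
  have m1: "[(1,1),(1,1)] \<in> S1 n 1 1" "[(1,1),(2,1),(1,-1)] \<in> S1 n 1 1"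
    using i1 i2 sg unfolding S1_def by auto
  have m2: "[(1,-1),(1,-1)] \<in> S1 n 1 (-1)" "[(1,-1),(2,1),(1,1)] \<in> S1 n 1 (-1)"
    using i1 i2 sg unfolding S1_def by auto
  have sub1: "S1 n 1 1 \<subseteq> Psi n" and sub2: "S1 n 1 (-1) \<subseteq> Psi n" using S1_sub L1 by auto
  have w22: "[(2,1),(2,1)] \<in> Psi n" using i2 sg unfolding Psi_def by blast
  have w22n: "[(2,1),(2,1)] \<notin> S1 n 1 1" "[(2,1),(2,1)] \<notin> S1 n 1 (-1)" unfolding S1_def by auto
  have posA: "0 < A1" "0 < A2" "0 < B1" "0 < B2" unfolding A1_def A2_def B1_def B2_def
    using pos m1 m2 sub1 sub2 by auto
  have AB1: "A1 + B1 \<le> s1"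
  proof -
    have "sum x {[(1,1),(1,1)], [(1,1),(2,1),(1,-1)]} \<le> s1" unfolding s1_def
      by (rule sum_mono2) (use m1 sub1 pos in \<open>auto intro: less_imp_le\<close>)
    then show ?thesis by (simp add: A1_def B1_def)
  qed
  have AB2: "A2 + B2 \<le> s2"
  proof -
    have "sum x {[(1,-1),(1,-1)], [(1,-1),(2,1),(1,1)]} \<le> s2" unfolding s2_def
      by (rule sum_mono2) (use m2 sub2 pos in \<open>auto intro: less_imp_le\<close>)
    then show ?thesis by (simp add: A2_def B2_def)
  qed
  have s12: "s1 + s2 \<le> 1"
  proof -
    have "s1 + s2 = sum x (S1 n 1 1 \<union> S1 n 1 (-1))" unfolding s1_def s2_def
      by (rule sum.union_disjoint[symmetric]) (simp_all add: S1_disj)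
    also have "\<dots> \<le> 1" by (rule sum_sub_bounds[OF x]) (use sub1 sub2 m1 in auto)
    finally show ?thesis .
  qed
  have c1: "sum x (Psi n - S1 n 1 1) = 1 - s1" unfolding s1_def using sum_diff[OF finite_Psi sub1, of x] tot by simp
  have c2: "sum x (Psi n - S1 n 1 (-1)) = 1 - s2" unfolding s2_def using sum_diff[OF finite_Psi sub2, of x] tot by simp
  have b1: "0 < 1 - s1" "1 - s1 \<le> 1" using sum_sub_bounds[OF x, of "Psi n - S1 n 1 1" "[(2,1),(2,1)]"] w22 w22n c1 by auto
  have b2: "0 < 1 - s2" "1 - s2 \<le> 1" using sum_sub_bounds[OF x, of "Psi n - S1 n 1 (-1)" "[(2,1),(2,1)]"] w22 w22n c2 by auto
  have b3: "0 < s1" "s1 \<le> 1" using sum_sub_bounds[OF x sub1 m1(1)] s1_def by auto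
  have b4: "0 < s2" "s2 \<le> 1" using sum_sub_bounds[OF x sub2 m2(1)] s2_def by auto
  have r1: "([(1,1),(1,1)], Psi n - S1 n 1 1) \<in> relsF n"
    unfolding relsF_def R1a_def using i1 sg by blast
  have r2: "([(1,-1),(1,-1)], Psi n - S1 n 1 (-1)) \<in> relsF n"
    unfolding relsF_def R1a_def using i1 sg by blast
  have r3: "([(1,1),(2,1),(1,-1)], S1 n 1 1) \<in> relsF n"
  proof -
    have "([(1::nat,1::int),(2,1),(1,-1)], S1 n 1 1) \<in> R4b n" unfolding R4b_def using i1 i2 sg by force
    then show ?thesis unfolding relsF_def by blast
  qed
  have r4: "([(1,-1),(2,1),(1,1)], S1 n 1 (-1)) \<in> relsF n"
  proof -
    have "([(1::nat,-1::int),(2,1),(1,- (-1))], S1 n 1 (-1)) \<in> R4b n" unfolding R4b_def using i1 i2 sg by force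
    then show ?thesis unfolding relsF_def by simp
  qed
  have e1: "1 - A1 - (1 - s1) < A1 / 2" using alg1[OF posA(1) b1(1) b1(2)] lt[OF r1] c1 by (simp add: frel_simp A1_def)
  have e2: "1 - A2 - (1 - s2) < A2 / 2" using alg1[OF posA(2) b2(1) b2(2)] lt[OF r2] c2 by (simp add: frel_simp A2_def)
  have e3: "1 - B1 - s1 < B1 / 2" using alg1[OF posA(3) b3(1) b3(2)] lt[OF r3] by (simp add: frel_simp B1_def s1_def)
  have e4: "1 - B2 - s2 < B2 / 2" using alg1[OF posA(4) b4(1) b4(2)] lt[OF r4] by (simp add: frel_simp B2_def s2_def)
  show False using e1 e2 e3 e4 AB1 AB2 s12 posA by linarith
qed

definition xpt :: "real \<Rightarrow> real \<Rightarrow> real \<Rightarrow> word \<Rightarrow> real" where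
  "xpt a e q w = (if length w = 2 then a else if w ! 2 = (fst (w ! 0), - snd (w ! 0)) then e else q)"

lemma card_Kset_real: "i \<in> idx n \<Longrightarrow> real (card (Kset n i)) = 2 * (real n - 1)"
  using card_Kset[of i n] by auto

lemma sum_S2_xpt:
  assumes "i \<in> idx n" "t \<in> sgns" "j \<in> idx n" "i \<noteq> j"
  shows "sum (xpt a e q) (S2 n i t j s) = e + 2 * (real n - 1) * q"
proof -
  have mem: "(i, -t) \<in> Kset n j" using assms by (auto simp: Kset_def Lt_def sgns_def)
  have "(\<Sum>l\<in>Kset n j. xpt a e q [(i,t),(j,s),l]) = (\<Sum>l\<in>Kset n j. if l = (i,-t) then e else q)"
    by (rule sum.cong) (auto simp: xpt_def)
  also have "\<dots> = e + (\<Sum>l\<in>Kset n j - {(i,-t)}. q)"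
    apply (subst sum.remove[OF finite_Kset mem])
    by simp
  also have "\<dots> = e + (real (card (Kset n j)) - 1) * q"
  proof -
    have "0 < card (Kset n j)" unfolding card_gt_0_iff using mem by auto
    then have "card (Kset n j) \<ge> 1" by simp
    then show ?thesis using mem by (simp add: card_Diff_singleton of_nat_diff)
  qed
  finally have "(\<Sum>l\<in>Kset n j. xpt a e q [(i,t),(j,s),l]) = e + (2 * (real n - 1) - 1) * q"
    using card_Kset_real[OF assms(3)] by simp
  moreover have "xpt a e q [(i,t),(j,s),(j,s)] = q" using assms by (auto simp: xpt_def)
  ultimately show ?thesis unfolding sum_S2 by (simp add: algebra_simps)
qed

lemma sum_S1_xpt:
  assumes "i \<in> idx n" "t \<in> sgns"
  shows "sum (xpt a e q) (S1 n i t) = a + 2 * (real n - 1) * (e + 2 * (real n - 1) * q)"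
proof -
  have "(\<Sum>l\<in>Kset n i. sum (xpt a e q) (S2 n i t (fst l) (snd l))) = (\<Sum>l\<in>Kset n i. e + 2 * (real n - 1) * q)"
  proof (rule sum.cong)
    fix l assume "l \<in> Kset n i"
    then have "fst l \<in> idx n" "i \<noteq> fst l" by (auto simp: Kset_def Lt_def)
    then show "sum (xpt a e q) (S2 n i t (fst l) (snd l)) = e + 2 * (real n - 1) * q"
      using sum_S2_xpt[OF assms(1) assms(2)] by blast
  qed simp
  also have "\<dots> = 2 * (real n - 1) * (e + 2 * (real n - 1) * q)" using card_Kset_real[OF assms(1)] by simp
  finally show ?thesis unfolding sum_S1 by (simp add: xpt_def)
qed

lemma sum_Psi_xpt:
  assumes "a + 2 * (real n - 1) * (e + 2 * (real n - 1) * q) = 1 / (2 * real n)" "n \<ge> 1"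
  shows "sum (xpt a e q) (Psi n) = 1"
proof -
  have "sum (xpt a e q) (Psi n) = (\<Sum>l\<in>Lt n. 1 / (2 * real n))"
    unfolding sum_Psi
  proof (rule sum.cong)
    fix l assume "l \<in> Lt n"
    then show "sum (xpt a e q) (S1 n (fst l) (snd l)) = 1 / (2 * real n)"
      using sum_S1_xpt[of "fst l" n "snd l" a e q] assms(1) by (auto simp: Lt_def)
  qed simp
  also have "\<dots> = 1" using card_Lt[of n] assms(2) by simp
  finally show ?thesis .
qed


lemma sum_compl:
  fixes x :: "word \<Rightarrow> real"
  assumes "sum x (Psi n) = 1" "S \<subseteq> Psi n"
  shows "sum x (Psi n - S) = 1 - sum x S"
  using sum_diff[OF finite_Psi assms(2), of x] assms(1) by simp

lemma G_bound:
  fixes a e q W2 lam :: real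
  assumes n: "n \<ge> 2" and pos: "0 < a" "0 < e" "0 < q"
   and W2: "W2 = e + 2 * (real n - 1) * q"
   and W1: "a + 2 * (real n - 1) * W2 = 1 / (2 * real n)"
   and h1a: "(1-a)/a * ((1 - (1 - 1/(2*real n)))/(1 - 1/(2*real n))) \<le> lam"
   and h1b: "(1-a)/a * ((1-(1-q))/(1-q)) \<le> lam"
   and h2a: "(1-q)/q * ((1-(1-a))/(1-a)) \<le> lam"
   and h2b: "(1-q)/q * ((1-(1-W2))/(1-W2)) \<le> lam"
   and h4a: "(1-e)/e * ((1-(1-W2))/(1-W2)) \<le> lam"
   and h4b: "(1-e)/e * ((1-1/(2*real n))/(1/(2*real n))) \<le> lam"
  shows "xpt a e q \<in> Delta n \<and> Gfun n (xpt a e q) \<le> lam"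
proof -
  let ?x = "xpt a e q"
  have tot: "sum ?x (Psi n) = 1" using sum_Psi_xpt[of a n e q] W1 W2 n by simp
  have xpos: "0 < ?x w" for w using pos by (simp add: xpt_def)
  have D: "?x \<in> Delta n" using tot xpos by (simp add: Delta_def)
  have S1v: "sum ?x (S1 n i t) = 1 / (2 * real n)" if "i \<in> idx n" "t \<in> sgns" for i t
    using sum_S1_xpt[OF that, of a e q] W1 W2 by simp
  have S2v: "sum ?x (S2 n i t j s) = W2" if "i \<in> idx n" "t \<in> sgns" "j \<in> idx n" "i \<noteq> j" for i t j s
    using sum_S2_xpt[OF that, of a e q s] W2 by simp
  have S1c: "sum ?x (Psi n - S1 n i t) = 1 - 1 / (2 * real n)" if "i \<in> idx n" "t \<in> sgns" for i t
    using sum_compl[OF tot S1_sub[of i t n]] S1v[OF that] that by (simp add: Lt_def)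
  have S2c: "sum ?x (Psi n - S2 n i t j s) = 1 - W2" if "i \<in> idx n" "t \<in> sgns" "j \<in> idx n" "s \<in> sgns" "i \<noteq> j" for i t j s
    using sum_compl[OF tot S2_sub[of i t n j s]] S2v[of i t j s] that by (simp add: Lt_def)
  have P1: "[(i,t),(i,t)] \<in> Psi n" if "i \<in> idx n" "t \<in> sgns" for i t
    using that unfolding Psi_def by blast
  have P3: "[(i,t),(j,s),(k,p)] \<in> Psi n" if "i \<in> idx n" "t \<in> sgns" "j \<in> idx n" "s \<in> sgns"
     "k \<in> idx n" "p \<in> sgns" "i \<noteq> j" "j \<noteq> k" for i t j s k p
    using that unfolding Psi_def by blast
  have sgn_ne: "t \<noteq> - t" if "t \<in> sgns" for t :: int using that by (auto simp: sgns_def)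
  have neg: "t \<in> sgns \<Longrightarrow> - t \<in> sgns" for t by (auto simp: sgns_def)
  have "frel r ?x \<le> lam" if r: "r \<in> relsG n" for r
  proof -
    consider "r \<in> R1a n" | "r \<in> R1b n" | "r \<in> R2a n" | "r \<in> R2b n" | "r \<in> R3a n" | "r \<in> R3b n"
      | "r \<in> R4a n" | "r \<in> R4b n" | "r \<in> R5a n" | "r \<in> R5b n" using r unfolding relsG_def by blast
    then show ?thesis
    proof cases
      case 1
      then obtain i t where h: "r = ([(i,t),(i,t)], Psi n - S1 n i t)" "i \<in> idx n" "t \<in> sgns"
        unfolding R1a_def by blast
      show ?thesis using h1a unfolding h(1) frel_simp S1c[OF h(2) h(3)] by (simp add: xpt_def)
    next
      case 2
      then obtain i j t s where h: "r = ([(i,t),(i,t)], Psi n - {[(i,t),(j,s),(i,t)]})" "i \<in> idx n" "j \<in> idx n" "i \<noteq> j" "t \<in> sgns" "s \<in> sgns"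
        unfolding R1b_def by blast
      have "sum ?x (Psi n - {[(i,t),(j,s),(i,t)]}) = 1 - q"
        using sum_compl[OF tot, of "{[(i,t),(j,s),(i,t)]}"] P3[OF h(2) h(5) h(3) h(6) h(2) h(5) h(4)] h(4) sgn_ne[OF h(5)]
        by (simp add: xpt_def)
      then show ?thesis using h1b unfolding h(1) frel_simp by (simp add: xpt_def)
    next
      case 3
      then obtain i j t s where h: "r = ([(i,t),(j,s),(j,s)], Psi n - {[(j,s),(j,s)]})" "i \<in> idx n" "j \<in> idx n" "i \<noteq> j" "t \<in> sgns" "s \<in> sgns"
        unfolding R2a_def by blast
      have "sum ?x (Psi n - {[(j,s),(j,s)]}) = 1 - a"
        using sum_compl[OF tot, of "{[(j,s),(j,s)]}"] P1[OF h(3) h(6)] by (simp add: xpt_def)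
      then show ?thesis using h2a h(4) unfolding h(1) frel_simp by (simp add: xpt_def)
    next
      case 4
      then obtain i j t s where h: "r = ([(i,t),(j,s),(j,s)], Psi n - S2 n i t j s)" "i \<in> idx n" "j \<in> idx n" "i \<noteq> j" "t \<in> sgns" "s \<in> sgns"
        unfolding R2b_def by blast
      show ?thesis using h2b h(4) unfolding h(1) frel_simp S2c[OF h(2) h(5) h(3) h(6) h(4)] by (simp add: xpt_def)
    next
      case 5
      then obtain i j t s where h: "r = ([(i,t),(j,s),(i,t)], Psi n - S2 n j s i t)" "i \<in> idx n" "j \<in> idx n" "i \<noteq> j" "t \<in> sgns" "s \<in> sgns"
        unfolding R3a_def by blast
      show ?thesis using h2b sgn_ne[OF h(5)] h(4) unfolding h(1) frel_simp S2c[OF h(3) h(6) h(2) h(5) h(4)[symmetric]] by (simp add: xpt_def)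
    next
      case 6
      then obtain i j t s where h: "r = ([(i,t),(j,s),(i,t)], Psi n - {[(i,t),(i,t)]})" "i \<in> idx n" "j \<in> idx n" "i \<noteq> j" "t \<in> sgns" "s \<in> sgns"
        unfolding R3b_def by blast
      have "sum ?x (Psi n - {[(i,t),(i,t)]}) = 1 - a"
        using sum_compl[OF tot, of "{[(i,t),(i,t)]}"] P1[OF h(2) h(5)] by (simp add: xpt_def)
      then show ?thesis using h2a sgn_ne[OF h(5)] unfolding h(1) frel_simp by (simp add: xpt_def)
    next
      case 7
      then obtain i j t s where h: "r = ([(i,t),(j,s),(i,-t)], Psi n - S2 n j s i (-t))" "i \<in> idx n" "j \<in> idx n" "i \<noteq> j" "t \<in> sgns" "s \<in> sgns"
        unfolding R4a_def by blast
      show ?thesis using h4a unfolding h(1) frel_simp S2c[OF h(3) h(6) h(2) neg[OF h(5)] h(4)[symmetric]] by (simp add: xpt_def)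
    next
      case 8
      then obtain i j t s where h: "r = ([(i,t),(j,s),(i,-t)], S1 n i t)" "i \<in> idx n" "j \<in> idx n" "i \<noteq> j" "t \<in> sgns" "s \<in> sgns"
        unfolding R4b_def by blast
      show ?thesis using h4b unfolding h(1) frel_simp S1v[OF h(2) h(5)] by (simp add: xpt_def)
    next
      case 9
      then obtain i j k t s p where h: "r = ([(i,t),(j,s),(k,p)], Psi n - S2 n j s k p)" "i \<in> idx n" "j \<in> idx n" "k \<in> idx n"
          "i \<noteq> j" "j \<noteq> k" "i \<noteq> k" "t \<in> sgns" "s \<in> sgns" "p \<in> sgns"
        unfolding R5a_def by blast
      show ?thesis using h2b h(7) unfolding h(1) frel_simp S2c[OF h(3) h(9) h(4) h(10) h(6)] by (simp add: xpt_def)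
    next
      case 10
      then obtain i j k t s p where h: "r = ([(i,t),(j,s),(k,p)], Psi n - S2 n i t k p)" "i \<in> idx n" "j \<in> idx n" "k \<in> idx n"
          "i \<noteq> j" "j \<noteq> k" "i \<noteq> k" "t \<in> sgns" "s \<in> sgns" "p \<in> sgns"
        unfolding R5b_def by blast
      show ?thesis using h2b h(7) unfolding h(1) frel_simp S2c[OF h(2) h(8) h(4) h(10) h(7)] by (simp add: xpt_def)
    qed
  qed
  moreover have "relsG n \<noteq> {}"
  proof -
    have "([(1,1),(1,1)], Psi n - S1 n 1 1) \<in> R1a n" unfolding R1a_def using n by (force simp: sgns_def)
    then show ?thesis unfolding relsG_def by blast
  qed
  ultimately have "Gfun n ?x \<le> lam" unfolding Gfun_def by (simp add: Max_le_iff)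
  then show ?thesis using D by simp
qed



lemma uniq_gen:
  fixes A B C D M l1 l2 :: real
  assumes M: "0 < M" "M \<le> l1" "l1 < l2" and A: "0 < A" and C: "C \<le> 0" and D: "0 \<le> D"
    and K: "0 < A*M^3 - 2*D - 3*M"
  shows "l2^3 * (A*l1^4 + B*l1^3 + C*l1^2 + D*l1 + M^2) < l1^3 * (A*l2^4 + B*l2^3 + C*l2^2 + D*l2 + M^2)"
proof -
  define p where "p = l1*l2"
  define br where "br = A*p^3 - C*p^2 - D*p*(l1+l2) - M^2*(l1^2+l1*l2+l2^2)"
  have id: "l1^3 * (A*l2^4 + B*l2^3 + C*l2^2 + D*l2 + M^2) - l2^3 * (A*l1^4 + B*l1^3 + C*l1^2 + D*l1 + M^2) = (l2-l1)*br"
    unfolding br_def p_def by algebra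
  have l1pos: "0 < l1" and l2pos: "0 < l2" using M by auto
  have Ml2: "M \<le> l2" using M by auto
  have pM: "M^2 \<le> p" unfolding p_def power2_eq_square by (rule mult_mono) (use M Ml2 in auto)
  have ppos: "0 < p" unfolding p_def using l1pos l2pos by simp
  have a1: "M*l1 \<le> p" unfolding p_def using mult_right_mono[OF Ml2, of l1] l1pos by (simp add: mult.commute)
  have a2: "M*l2 \<le> p" unfolding p_def using mult_right_mono[OF M(2), of l2] l2pos by simp
  have f1: "M*(l1+l2) \<le> 2*p" using a1 a2 by (simp add: algebra_simps)
  have b1: "(M*l1)^2 \<le> p^2" by (rule power_mono[OF a1]) (use M l1pos in simp)
  have b2: "(M*l2)^2 \<le> p^2" by (rule power_mono[OF a2]) (use M l2pos in simp)
  have b3: "M^2*p \<le> p*p" using mult_right_mono[OF pM, of p] ppos by simp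
  have f2: "M^2*(l1^2+l1*l2+l2^2) \<le> 3*p^2"
  proof -
    have "M^2*(l1^2+l1*l2+l2^2) = (M*l1)^2 + M^2*p + (M*l2)^2" unfolding p_def by algebra
    also have "\<dots> \<le> 3*p^2" using b1 b2 b3 by (simp add: power2_eq_square)
    finally show ?thesis .
  qed
  have f3: "0 \<le> -C*p^2" using C by (simp add: mult_nonpos_nonneg)
  have f4: "D*p*(M*(l1+l2)) \<le> D*p*(2*p)" by (rule mult_left_mono[OF f1]) (use D ppos in simp)
  have f5: "A*M*M^2 \<le> A*M*p" by (rule mult_left_mono[OF pM]) (use A M in simp)
  have f6: "M*(M^2*(l1^2+l1*l2+l2^2)) \<le> M*(3*p^2)" by (rule mult_left_mono[OF f2]) (use M in simp)
  have f7: "M*(-C*p^2) \<ge> 0" using mult_nonneg_nonneg[OF less_imp_le[OF M(1)] f3] by simp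
  have "M*br = A*M*p*p^2 + M*(-C*p^2) - D*p*(M*(l1+l2)) - M*(M^2*(l1^2+l1*l2+l2^2))"
    unfolding br_def by algebra
  also have "\<dots> \<ge> A*M*p*p^2 - D*p*(2*p) - M*(3*p^2)" using f4 f6 f7 by linarith
  finally have g1: "M*br \<ge> p^2 * (A*M*p - 2*D - 3*M)" by (simp add: algebra_simps power2_eq_square)
  have g2: "A*M*p - 2*D - 3*M \<ge> A*M^3 - 2*D - 3*M" using f5 by (simp add: power2_eq_square power3_eq_cube mult.assoc)
  have "0 < p^2 * (A*M*p - 2*D - 3*M)" using g2 K ppos by simp
  then have "0 < M*br" using g1 by linarith
  then have "0 < br" using M by (simp add: zero_less_mult_iff)
  then have "0 < (l2-l1)*br" using M by simp
  then show ?thesis using id by linarith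
qed

lemma Pm2_t: fixes t :: real assumes "real n = t + 2"
  shows "Ppoly n ((2*real n-1)^2) = -(276480 + 2377728*t + 9354240*t^2 + 22255616*t^3 + 35652480*t^4 + 40494464*t^5 + 33421184*t^6 + 20184192*t^7 + 8848128*t^8 + 2744320*t^9 + 571392*t^10 + 71680*t^11 + 4096*t^12)"
  unfolding Ppoly_def Let_def assms by algebra

lemma P8_t: fixes t :: real assumes "real n = t + 2"
  shows "Ppoly n (8*real n^3) = 219620945 + 1750829912*t + 6425251480*t^2 + 14402822336*t^3 + 22050518400*t^4 + 24408121312*t^5 + 20156380544*t^6 + 12621428736*t^7 + 6024542720*t^8 + 2182266368*t^9 + 590699520*t^10 + 115896320*t^11 + 15585280*t^12 + 1286144*t^13 + 49152*t^14"
  unfolding Ppoly_def Let_def assms by algebra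


lemma Ppoly_coef: "Ppoly n l = (8*real n^3 - 12*real n^2 + 2*real n + 1) * l^4
   + (-64*real n^6 + 192*real n^5 - 192*real n^4 + 64*real n^3 + 4*real n^2 + 2*real n - 4) * l^3
   + (-96*real n^5 + 224*real n^4 - 168*real n^3 + 52*real n^2 - 18*real n + 6) * l^2
   + (32*real n^5 - 112*real n^4 + 128*real n^3 - 68*real n^2 + 22*real n - 4) * l + ((2*real n - 1)^2)^2"
  unfolding Ppoly_def Let_def by algebra

lemma nat_t: assumes "n \<ge> 2" obtains t :: real where "0 \<le> t" "real n = t + 2"
proof -
  have "0 \<le> real n - 2" using assms by simp
  then show ?thesis using that[of "real n - 2"] by simp
qed

lemma signs:
  assumes "n \<ge> 2"
  shows "0 < 8*real n^3 - 12*real n^2 + 2*real n + 1"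
    "-96*real n^5 + 224*real n^4 - 168*real n^3 + 52*real n^2 - 18*real n + 6 \<le> 0"
    "0 \<le> 32*real n^5 - 112*real n^4 + 128*real n^3 - 68*real n^2 + 22*real n - 4"
    "0 < (8*real n^3 - 12*real n^2 + 2*real n + 1) * ((2*real n - 1)^2)^3
         - 2 * (32*real n^5 - 112*real n^4 + 128*real n^3 - 68*real n^2 + 22*real n - 4) - 3 * (2*real n - 1)^2"
proof -
  obtain t :: real where t: "0 \<le> t" "real n = t + 2" using nat_t[OF assms] by blast
  have "8*real n^3 - 12*real n^2 + 2*real n + 1 = 21 + 50*t + 36*t^2 + 8*t^3" unfolding t(2) by algebra
  moreover have "0 < 21 + 50*t + 36*t^2 + 8*t^3"
    by (intro add_pos_nonneg mult_nonneg_nonneg zero_le_power) (simp_all add: t)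
  ultimately show "0 < 8*real n^3 - 12*real n^2 + 2*real n + 1" by simp
  have "-96*real n^5 + 224*real n^4 - 168*real n^3 + 52*real n^2 - 18*real n + 6 = -(654 + 2338*t + 3260*t^2 + 2216*t^3 + 736*t^4 + 96*t^5)" unfolding t(2) by algebra
  moreover have "0 < 654 + 2338*t + 3260*t^2 + 2216*t^3 + 736*t^4 + 96*t^5"
    by (intro add_pos_nonneg mult_nonneg_nonneg zero_le_power) (simp_all add: t)
  ultimately show "-96*real n^5 + 224*real n^4 - 168*real n^3 + 52*real n^2 - 18*real n + 6 \<le> 0" by simp
  have "32*real n^5 - 112*real n^4 + 128*real n^3 - 68*real n^2 + 22*real n - 4 = 24 + 262*t + 572*t^2 + 512*t^3 + 208*t^4 + 32*t^5" unfolding t(2) by algebra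
  moreover have "0 < 24 + 262*t + 572*t^2 + 512*t^3 + 208*t^4 + 32*t^5"
    by (intro add_pos_nonneg mult_nonneg_nonneg zero_le_power) (simp_all add: t)
  ultimately show "0 \<le> 32*real n^5 - 112*real n^4 + 128*real n^3 - 68*real n^2 + 22*real n - 4" by simp
  have "(8*real n^3 - 12*real n^2 + 2*real n + 1) * ((2*real n - 1)^2)^3
         - 2 * (32*real n^5 - 112*real n^4 + 128*real n^3 - 68*real n^2 + 22*real n - 4) - 3 * (2*real n - 1)^2
     = 15234 + 97126*t + 272948*t^2 + 443504*t^3 + 459232*t^4 + 314432*t^5 + 142464*t^6 + 41216*t^7 + 6912*t^8 + 512*t^9"
    unfolding t(2) by algebra
  moreover have "0 < 15234 + 97126*t + 272948*t^2 + 443504*t^3 + 459232*t^4 + 314432*t^5 + 142464*t^6 + 41216*t^7 + 6912*t^8 + 512*t^9"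
    by (intro add_pos_nonneg mult_nonneg_nonneg zero_le_power) (simp_all add: t)
  ultimately show "0 < (8*real n^3 - 12*real n^2 + 2*real n + 1) * ((2*real n - 1)^2)^3
         - 2 * (32*real n^5 - 112*real n^4 + 128*real n^3 - 68*real n^2 + 22*real n - 4) - 3 * (2*real n - 1)^2" by simp
qed

lemma P_uniq:
  assumes n: "n \<ge> 2" and l: "(2*real n - 1)^2 \<le> l1" "l1 < l2" and z: "Ppoly n l1 = 0"
  shows "Ppoly n l2 \<noteq> 0"
proof -
  have M: "0 < (2*real n - 1)^2" using n by simp
  have "l2^3 * Ppoly n l1 < l1^3 * Ppoly n l2"
    unfolding Ppoly_coef
    by (rule uniq_gen[OF M l signs(1)[OF n] signs(2)[OF n] signs(3)[OF n] signs(4)[OF n]])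
  then show ?thesis using z by auto
qed

lemma P_neg: assumes "n \<ge> 2" shows "Ppoly n ((2*real n - 1)^2) < 0"
proof -
  obtain t :: real where t: "0 \<le> t" "real n = t + 2" using nat_t[OF assms] by blast
  have "0 < 276480 + 2377728*t + 9354240*t^2 + 22255616*t^3 + 35652480*t^4 + 40494464*t^5 + 33421184*t^6 + 20184192*t^7 + 8848128*t^8 + 2744320*t^9 + 571392*t^10 + 71680*t^11 + 4096*t^12"
    by (intro add_pos_nonneg mult_nonneg_nonneg zero_le_power) (simp_all add: t)
  then show ?thesis using Pm2_t[OF t(2)] by simp
qed

lemma P_pos: assumes "n \<ge> 2" shows "Ppoly n (8*real n^3) > 0"
proof -
  obtain t :: real where t: "0 \<le> t" "real n = t + 2" using nat_t[OF assms] by blast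
  have "0 < 219620945 + 1750829912*t + 6425251480*t^2 + 14402822336*t^3 + 22050518400*t^4 + 24408121312*t^5 + 20156380544*t^6 + 12621428736*t^7 + 6024542720*t^8 + 2182266368*t^9 + 590699520*t^10 + 115896320*t^11 + 15585280*t^12 + 1286144*t^13 + 49152*t^14"
    by (intro add_pos_nonneg mult_nonneg_nonneg zero_le_power) (simp_all add: t)
  then show ?thesis using P8_t[OF t(2)] by simp
qed

lemma alpha_prop:
  assumes n: "n \<ge> 2"
  shows "alpha n > (2*real n - 1)^2 \<and> Ppoly n (alpha n) = 0"
proof -
  let ?M = "(2*real n - 1)^2"
  have le: "?M \<le> 8*real n^3"
  proof -
    have "?M \<le> (2*real n)^2" using n by (intro power_mono) auto
    also have "\<dots> = 4 * real n^2" by (simp add: power_mult_distrib)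
    also have "\<dots> \<le> 8 * real n^2 * real n" using n by simp
    finally show ?thesis by (simp add: power2_eq_square power3_eq_cube)
  qed
  have cont: "\<forall>x. ?M \<le> x \<and> x \<le> 8*real n^3 \<longrightarrow> isCont (Ppoly n) x"
  proof (intro allI impI)
    fix x
    have "isCont (\<lambda>l. Ppoly n l) x" unfolding Ppoly_def Let_def by (intro continuous_intros)
    then show "isCont (Ppoly n) x" by simp
  qed
  obtain l where l: "?M \<le> l" "l \<le> 8*real n^3" "Ppoly n l = 0"
    using IVT[of "Ppoly n" ?M 0 "8*real n^3", OF less_imp_le[OF P_neg[OF n]] less_imp_le[OF P_pos[OF n]] le cont] by blast
  have lgt: "?M < l" using l P_neg[OF n] by (cases "l = ?M") auto
  have ex1: "\<exists>!l. l > ?M \<and> Ppoly n l = 0"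
  proof (rule ex1I[of _ l])
    show "l > ?M \<and> Ppoly n l = 0" using lgt l by simp
    fix y assume y: "y > ?M \<and> Ppoly n y = 0"
    show "y = l"
    proof (rule ccontr)
      assume "y \<noteq> l"
      then consider "y < l" | "l < y" by linarith
      then show False
      proof cases
        case 1 then show False using P_uniq[OF n _ 1] y l by auto
      next
        case 2 then show False using P_uniq[OF n _ 2] y l lgt by auto
      qed
    qed
  qed
  show ?thesis unfolding alpha_def using theI'[OF ex1] by simp
qed



lemma point_facts:
  fixes N lam :: real
  assumes N: "N \<ge> 2" and lam: "lam > (2*N-1)^2"
    and P0: "(8*N^3 - 12*N^2 + 2*N + 1) * lam^4
   + (-64*N^6 + 192*N^5 - 192*N^4 + 64*N^3 + 4*N^2 + 2*N - 4) * lam^3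
   + (-96*N^5 + 224*N^4 - 168*N^3 + 52*N^2 - 18*N + 6) * lam^2
   + (32*N^5 - 112*N^4 + 128*N^3 - 68*N^2 + 22*N - 4) * lam + 16*N^4 - 32*N^3 + 24*N^2 - 8*N + 1 = 0"
  defines "m \<equiv> 2*N - 1" and "k \<equiv> N - 1"
  defines "Qv \<equiv> lam^2 + (m - 1 - 4*N*k*m)*lam - (m + 4*N*k)"
  defines "a \<equiv> 1/(1 + m*lam)" and "e \<equiv> m/(lam + m)"
    and "W2 \<equiv> m*(lam-1)/(4*N*k*(1+m*lam))" and "q \<equiv> m*Qv/(8*N*k^2*(1+m*lam)*(lam+m))"
  shows "0 < a \<and> 0 < e \<and> 0 < q \<and> W2 = e + 2*k*q \<and> a + 2*k*W2 = 1/(2*N)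
     \<and> (1-q)*W2 = lam*q*(1-W2)"
proof -
  have m: "m \<ge> 3" unfolding m_def using N by simp
  have k: "k \<ge> 1" unfolding k_def using N by simp
  have "1 \<le> (2*N-1)^2" using N by (intro one_le_power) simp
  then have lam1: "lam > 1" using lam by linarith
  define Tv where "Tv = 4*N*k*(1+m*lam) - m*(lam-1)"
  define Uv where "Uv = 8*N*k^2*(1+m*lam)*(lam+m) - m*Qv"
  have Pid: "lam*Qv*Tv - (lam-1)*Uv = 0"
  proof -
    have "lam*Qv*Tv - (lam-1)*Uv = (8*N^3 - 12*N^2 + 2*N + 1) * lam^4
   + (-64*N^6 + 192*N^5 - 192*N^4 + 64*N^3 + 4*N^2 + 2*N - 4) * lam^3
   + (-96*N^5 + 224*N^4 - 168*N^3 + 52*N^2 - 18*N + 6) * lam^2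
   + (32*N^5 - 112*N^4 + 128*N^3 - 68*N^2 + 22*N - 4) * lam + 16*N^4 - 32*N^3 + 24*N^2 - 8*N + 1"
      unfolding Tv_def Uv_def Qv_def m_def k_def by algebra
    then show ?thesis using P0 by simp
  qed
  have "N*k \<ge> 2*1" by (rule mult_mono) (use N k in auto)
  then have NK: "4*N*k \<ge> 1" by simp
  have ml: "0 < m*lam" using m lam1 by simp
  have Tpos: "Tv > 0"
  proof -
    have "4*N*k*(1+m*lam) \<ge> 1*(1+m*lam)" by (rule mult_right_mono[OF NK]) (use ml in simp)
    then show ?thesis unfolding Tv_def using m ml by (simp add: algebra_simps)
  qed
  have Qpos: "Qv > 0"
  proof (rule ccontr)
    assume "\<not> Qv > 0"
    then have Q0: "Qv \<le> 0" by simp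
    have d1: "1 + m*lam > 0" using ml by simp
    have d2: "lam + m > 0" using m lam1 by simp
    have "8*N*k^2*(1+m*lam)*(lam+m) > 0" using N k d1 d2 by (intro mult_pos_pos) auto
    moreover have "m*Qv \<le> 0" using Q0 m by (simp add: mult_nonneg_nonpos)
    ultimately have U: "Uv > 0" unfolding Uv_def by linarith
    have "lam*Qv*Tv \<le> 0" using Q0 Tpos lam1 by (simp add: mult_nonpos_nonneg mult_nonneg_nonpos)
    moreover have "(lam-1)*Uv > 0" using U lam1 by simp
    ultimately show False using Pid by linarith
  qed
  have d1: "1 + m*lam > 0" using ml by simp
  have d2: "lam + m > 0" using m lam1 by simp
  have Nk: "N*k > 0" using N k by simp
  have apos: "0 < a" unfolding a_def using d1 by simp
  have epos: "0 < e" unfolding e_def using d2 m by simp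
  have qpos: "0 < q" unfolding q_def using d1 d2 m Qpos N k by simp
  define D1 where "D1 = 1 + m*lam"
  define D2 where "D2 = lam + m"
  have nz: "D1 \<noteq> 0" "D2 \<noteq> 0" "N \<noteq> 0" "k \<noteq> 0" using d1 d2 N k unfolding D1_def D2_def by auto
  have av: "a = 1/D1" and ev: "e = m/D2" and Wv: "W2 = m*(lam-1)/(4*N*k*D1)" and qv: "q = m*Qv/(8*N*k^2*D1*D2)"
    unfolding a_def e_def W2_def q_def D1_def D2_def by auto
  have r1: "W2 = e + 2*k*q"
    unfolding Wv ev qv
    apply (simp add: field_simps nz)
    apply (unfold m_def k_def D1_def D2_def Qv_def)
    by algebra
  have r2: "a + 2*k*W2 = 1/(2*N)"
    unfolding Wv av
    apply (simp add: field_simps nz)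
    apply (unfold m_def k_def D1_def)
    by algebra
  have r3: "(1-q)*W2 - lam*q*(1-W2) = - m*(lam*Qv*Tv - (lam-1)*Uv)/(32*N^2*k^3*D1^2*D2)"
    unfolding Wv qv
    apply (simp add: field_simps nz)
    apply (unfold Tv_def Uv_def m_def k_def D1_def D2_def Qv_def)
    by algebra
  have r4: "(1-q)*W2 = lam*q*(1-W2)" using r3 Pid by simp
  show ?thesis using apos epos qpos r1 r2 r4 by simp
qed



lemma h_facts:
  fixes N lam a e q W2 :: real
  assumes N: "N \<ge> 2" and lam: "lam > 1" and pos: "0 < a" "0 < e" "0 < q"
    and av: "a = 1/(1 + (2*N-1)*lam)" and ev: "e = (2*N-1)/(lam + (2*N-1))"
    and r1: "W2 = e + 2*(N-1)*q" and r2: "a + 2*(N-1)*W2 = 1/(2*N)"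
    and r4: "(1-q)*W2 = lam*q*(1-W2)"
  shows "(1-a)/a * ((1 - (1 - 1/(2*N)))/(1 - 1/(2*N))) \<le> lam"
   and "(1-a)/a * ((1-(1-q))/(1-q)) \<le> lam"
   and "(1-q)/q * ((1-(1-a))/(1-a)) \<le> lam"
   and "(1-q)/q * ((1-(1-W2))/(1-W2)) \<le> lam"
   and "(1-e)/e * ((1-(1-W2))/(1-W2)) \<le> lam"
   and "(1-e)/e * ((1-1/(2*N))/(1/(2*N))) \<le> lam"
proof -
  define m where "m = 2*N - 1"
  have m: "m \<ge> 3" unfolding m_def using N by simp
  have d1: "1 + m*lam > 0" using m lam by (simp add: add_pos_pos)
  have d2: "lam + m > 0" using m lam by simp
  have ra: "(1-a)/a = m*lam" unfolding av m_def[symmetric] using d1 by (simp add: field_simps)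
  have re: "(1-e)/e = lam/m"
  proof -
    have "1 - e = lam/(lam+m)" unfolding ev m_def[symmetric] using d2 by (simp add: field_simps)
    then have "(1-e)/e = (lam/(lam+m))/(m/(lam+m))" unfolding ev m_def[symmetric] by simp
    also have "\<dots> = lam/m" using d2 by (simp add: order.strict_implies_not_eq[OF d2, symmetric])
    finally show ?thesis .
  qed
  have k: "N - 1 \<ge> 1" using N by simp
  have Wpos: "0 < W2" using r1 pos k by (simp add: add_pos_nonneg)
  have hN: "1/(2*N) \<le> 1/4" using N by (simp add: field_simps)
  have q1: "q \<le> 1/(2*N)"
  proof -
    have "q \<le> 2*(N-1)*q" using k pos by simp
    also have "\<dots> \<le> W2" using r1 pos by simp
    also have "W2 \<le> 2*(N-1)*W2" using k Wpos by simp
    also have "\<dots> \<le> 1/(2*N)" using r2 pos by simp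
    finally show ?thesis .
  qed
  have W1: "W2 \<le> 1/2"
  proof -
    have "W2 \<le> 2*(N-1)*W2" using k Wpos by simp
    also have "\<dots> \<le> 1/(2*N)" using r2 pos by simp
    finally show ?thesis using hN by simp
  qed
  have lamq: "lam = (1-q)/q * (W2/(1-W2))" using r4 pos W1 by (simp add: field_simps)
  show "(1-a)/a * ((1 - (1 - 1/(2*N)))/(1 - 1/(2*N))) \<le> lam"
  proof -
    have "(1 - (1 - 1/(2*N)))/(1 - 1/(2*N)) = 1/m" unfolding m_def using N by (simp add: field_simps)
    then show ?thesis using ra m by simp
  qed
  show "(1-e)/e * ((1-1/(2*N))/(1/(2*N))) \<le> lam"
  proof -
    have "(1-1/(2*N))/(1/(2*N)) = m" unfolding m_def using N by (simp add: field_simps)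
    then show ?thesis using re m by simp
  qed
  show "(1-a)/a * ((1-(1-q))/(1-q)) \<le> lam"
  proof -
    have "m*q \<le> 1 - q" using q1 N unfolding m_def by (simp add: field_simps)
    then have "lam*(m*q) \<le> lam*(1-q)" using lam by (intro mult_left_mono) auto
    then have "m*lam*q \<le> lam*(1-q)" by (simp add: algebra_simps)
    then have "m*lam*(q/(1-q)) \<le> lam" using q1 hN by (simp add: field_simps)
    then show ?thesis using ra by simp
  qed
  show "(1-q)/q * ((1-(1-W2))/(1-W2)) \<le> lam" using lamq by simp
  show "(1-e)/e * ((1-(1-W2))/(1-W2)) \<le> lam"
  proof -
    have "W2/(1-W2) \<le> 1" using W1 by (simp add: field_simps)
    also have "1 \<le> m" using m by simp
    finally have "lam/m * (W2/(1-W2)) \<le> lam/m * m" by (rule mult_left_mono) (use lam m in simp)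
    then show ?thesis using re m by simp
  qed
  show "(1-q)/q * ((1-(1-a))/(1-a)) \<le> lam"
  proof -
    have ae: "a \<le> e" unfolding av ev m_def[symmetric]
    proof -
      have "lam + m \<le> m*(1 + m*lam)"
      proof -
        have mm: "1 \<le> m*m" using mult_mono[of 1 m 1 m] m by simp
        have "1*lam \<le> m*m*lam" by (rule mult_right_mono[OF mm]) (use lam in simp)
        then have "lam \<le> m*m*lam" by simp
        then show ?thesis by (simp add: algebra_simps)
      qed
      then show "1/(1 + m*lam) \<le> m/(lam + m)" using d1 d2 by (simp add: field_simps)
    qed
    have "0 \<le> 2*(N-1)*q" using pos k by simp
    then have aW: "a \<le> W2" using ae r1 by linarith
    have "a/(1-a) \<le> W2/(1-W2)"
    proof -
      have "a*(1-W2) \<le> W2*(1-a)" using aW by (simp add: algebra_simps)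
      then show ?thesis using aW W1 by (simp add: field_simps)
    qed
    then have "(1-q)/q * (a/(1-a)) \<le> (1-q)/q * (W2/(1-W2))"
      by (rule mult_left_mono) (use pos q1 hN in simp)
    then show ?thesis using lamq by simp
  qed
qed


lemma point_exists:
  assumes n: "n \<ge> 2"
  shows "\<exists>a e q W2. 0 < a \<and> 0 < e \<and> 0 < q \<and> a = 1/(1 + (2*real n - 1)*alpha n)
     \<and> e = (2*real n - 1)/(alpha n + (2*real n - 1)) \<and> W2 = e + 2*(real n - 1)*q
     \<and> a + 2*(real n - 1)*W2 = 1/(2*real n) \<and> (1-q)*W2 = alpha n*q*(1-W2)"
proof -
  have N: "real n \<ge> 2" using n by simp
  have al: "alpha n > (2*real n - 1)^2" "Ppoly n (alpha n) = 0" using alpha_prop[OF n] by auto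
  have P0: "(8*real n^3 - 12*real n^2 + 2*real n + 1) * alpha n^4
   + (-64*real n^6 + 192*real n^5 - 192*real n^4 + 64*real n^3 + 4*real n^2 + 2*real n - 4) * alpha n^3
   + (-96*real n^5 + 224*real n^4 - 168*real n^3 + 52*real n^2 - 18*real n + 6) * alpha n^2
   + (32*real n^5 - 112*real n^4 + 128*real n^3 - 68*real n^2 + 22*real n - 4) * alpha n + 16*real n^4 - 32*real n^3 + 24*real n^2 - 8*real n + 1 = 0"
    using al(2) unfolding Ppoly_def Let_def by simp
  note pf = point_facts[OF N al(1) P0]
  show ?thesis
    apply (rule exI[of _ "1/(1 + (2*real n - 1)*alpha n)"])
    apply (rule exI[of _ "(2*real n - 1)/(alpha n + (2*real n - 1))"])
    apply (rule exI[of _ "(2*real n - 1)*((alpha n)^2 + ((2*real n - 1) - 1 - 4*real n*(real n - 1)*(2*real n - 1))*alpha n - ((2*real n - 1) + 4*real n*(real n - 1)))/(8*real n*(real n - 1)^2*(1+(2*real n - 1)*alpha n)*(alpha n+(2*real n - 1)))"])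
    apply (rule exI[of _ "(2*real n - 1)*(alpha n-1)/(4*real n*(real n - 1)*(1+(2*real n - 1)*alpha n))"])
    using pf by blast
qed

theorem lemma5p3:
  fixes n :: nat
  assumes "n \<ge> 2"
  shows "1 < (INF x\<in>Delta n. Ffun n x)
       \<and> (INF x\<in>Delta n. Ffun n x) \<le> (INF x\<in>Delta n. Gfun n x)
       \<and> (INF x\<in>Delta n. Gfun n x) \<le> alpha n"
proof -
  have n: "n \<ge> 2" using assms .
  obtain a e q W2 where p: "0 < a" "0 < e" "0 < q" "a = 1/(1 + (2*real n - 1)*alpha n)"
     "e = (2*real n - 1)/(alpha n + (2*real n - 1))" "W2 = e + 2*(real n - 1)*q"
     "a + 2*(real n - 1)*W2 = 1/(2*real n)" "(1-q)*W2 = alpha n*q*(1-W2)"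
    using point_exists[OF n] by blast
  have N: "real n \<ge> 2" using n by simp
  have "1 \<le> (2*real n - 1)^2" using N by (intro one_le_power) simp
  then have lam1: "alpha n > 1" using alpha_prop[OF n] by linarith
  note hf = h_facts[OF N lam1 p(1) p(2) p(3) p(4) p(5) p(6) p(7) p(8)]
  have gb: "xpt a e q \<in> Delta n \<and> Gfun n (xpt a e q) \<le> alpha n"
    by (rule G_bound[OF n p(1) p(2) p(3) p(6) p(7) hf(1) hf(2) hf(3) hf(4) hf(5) hf(6)])
  have ne: "Delta n \<noteq> {}" using gb by blast
  have Flow: "\<And>x. x \<in> Delta n \<Longrightarrow> 3/2 \<le> Ffun n x" using F_lower[OF n] by blast
  have relsF_ne: "relsF n \<noteq> {}"
  proof -
    have "([(1,1),(1,1)], Psi n - S1 n 1 1) \<in> R1a n" unfolding R1a_def using n by (force simp: sgns_def)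
    then show ?thesis unfolding relsF_def by blast
  qed
  have FG: "Ffun n x \<le> Gfun n x" for x
    unfolding Ffun_def Gfun_def
    by (rule Max_mono) (use relsF_sub relsF_ne in auto)
  have bF: "bdd_below (Ffun n ` Delta n)" by (rule bdd_belowI2[where m="3/2"]) (rule Flow)
  have bG: "bdd_below (Gfun n ` Delta n)" by (rule bdd_belowI2[where m="3/2"]) (meson Flow FG order_trans)
  have 1: "3/2 \<le> (INF x\<in>Delta n. Ffun n x)" by (rule cINF_greatest[OF ne Flow])
  have 2: "(INF x\<in>Delta n. Ffun n x) \<le> (INF x\<in>Delta n. Gfun n x)"
    by (rule cINF_mono[OF ne bF]) (use FG in auto)
  have 3: "(INF x\<in>Delta n. Gfun n x) \<le> alpha n"
    by (rule cINF_lower2[OF bG]) (use gb in auto)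
  show ?thesis using 1 2 3 by simp
qed

end
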